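(* Let $d\ge 2$ be an integer, let $\alpha_0,\alpha_{d+1},\beta_0,\beta_{d+1}\in\mathbb R$ and $\mathbf a,\mathbf b\in\mathbb R^d$. Define the symmetric $(d+1)\times(d+1)$ matrices $$A=\begin{pmatrix}\alpha_0\,\mathrm{Id}_d & -2\mathbf a\\ -2\mathbf a^T & 2\alpha_{d+1}\end{pmatrix},\qquad B=\begin{pmatrix}\beta_0\,\mathrm{Id}_d & -2\mathbf b\\ -2\mathbf b^T & 2\beta_{d+1}\end{pmatrix},$$ where $\mathrm{Id}_d$ is the $d\times d$ identity matrix, and assume that $A$ is positive definite. Set $$\Delta=\big(4\,\mathbf a^T\mathbf b-(\beta_{d+1}\alpha_0+\beta_0\alpha_{d+1})\big)^2-4\big(2\Vert\mathbf a\Vert^2-\alpha_0\alpha_{d+1}\big)\big(2\Vert\mathbf b\Vert^2-\beta_0\beta_{d+1}\big).$$ Then $\Delta\ge 0$, $4\Vert\mathbf a\Vert^2-2\alpha_0\alpha_{d+1}\neq 0$, and, with $$\lambda_\pm=\frac{\big(-4\,\mathbf a^T\mathbf b+(\beta_{d+1}\alpha_0+\beta_0\alpha_{d+1})\big)\pm\sqrt{\Delta}}{4\Vert\mathbf a\Vert^2-2\alpha_0\alpha_{d+1}},$$ one has $$\max_{\mathbf z\in\mathbb R^{d+1}\setminus\{0\}}\frac{\vert\mathbf z^TB\mathbf z\vert}{\mathbf z^TA\mathbf z}=\rho\big(A^{-1/2}BA^{-1/2}\big)=\max\Big(\frac{\vert\beta_0\vert}{\alpha_0},\ \vert\lambda_+\vert,\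 \vert\lambda_-\vert\Big),$$ where $\rho(\cdot)$ denotes the spectral radius and $A^{-1/2}$ is the inverse of the symmetric positive definite square root of $A$.
   Context: $\Vert\cdot\Vert$ is the Euclidean norm on $\mathbb R^d$. This computation is used to determine the blending coefficients guaranteeing positivity of internal energy in a bound-preserving scheme for the Euler equations, via the ratio $\vert(\Delta\hat{\mathbf f})^T\psi(\mathbf w)\vert/(\mathbf u^{\star})^T\psi(\mathbf w)$ with $\psi(\mathbf w)=(\tfrac{\Vert\mathbf w\Vert^2}{2},-\mathbf w,1)$, after homogenizing $\mathbf w\mapsto\mathbf w/w_{d+1}$ and setting $\mathbf z=(\mathbf w,w_{d+1})$. *)

theory Defs
  imports "Jordan_Normal_Form.Spectral_Radius"
begin

definition block_mat :: "nat \<Rightarrow> real \<Rightarrow> real vec \<Rightarrow> real \<Rightarrow> real mat" where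
  "block_mat d c0 v c1 = mat (d+1) (d+1) (\<lambda>(i,j).
     if i < d \<and> j < d then (if i = j then c0 else 0)
     else if i < d then -2 * v $ i
     else if j < d then -2 * v $ j
     else 2 * c1)"

definition pos_def_mat :: "nat \<Rightarrow> real mat \<Rightarrow> bool" where
  "pos_def_mat n A \<longleftrightarrow> A \<in> carrier_mat n n \<and> transpose_mat A = A \<and>
     (\<forall>v \<in> carrier_vec n. v \<noteq> 0\<^sub>v n \<longrightarrow> v \<bullet> (A *\<^sub>v v) > 0)"

definition pd_sqrt :: "nat \<Rightarrow> real mat \<Rightarrow> real mat" where
  "pd_sqrt n A = (THE S. pos_def_mat n S \<and> S * S = A)"

definition mat_inv :: "nat \<Rightarrow> real mat \<Rightarrow> real mat" where
  "mat_inv n A = (THE B. B \<in> carrier_mat n n \<and> A * B = 1\<^sub>m n \<and> B * A = 1\<^sub>m n)"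

definition inv_sqrt :: "nat \<Rightarrow> real mat \<Rightarrow> real mat" where
  "inv_sqrt n A = mat_inv n (pd_sqrt n A)"

end

theory Submission
  imports Defs
begin


definition gblock :: "nat \<Rightarrow> real \<Rightarrow> real \<Rightarrow> real vec \<Rightarrow> real \<Rightarrow> real \<Rightarrow> real mat" where
  "gblock d p u v w r = mat (d+1) (d+1) (\<lambda>(i,j).
     if i < d \<and> j < d then (if i = j then p else 0) + u * v$i * v$j
     else if i < d then w * v $ i
     else if j < d then w * v $ j
     else r)"

lemma block_gblock: "block_mat d c0 v c1 = gblock d c0 0 v (-2) (2*c1)"
  unfolding block_mat_def gblock_def by (rule arg_cong[where f="mat _ _"], auto)

lemma gblock_carrier[simp]: "gblock d p u v w r \<in> carrier_mat (d+1) (d+1)"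
  unfolding gblock_def by auto

lemma gblock_dims[simp]: "dim_row (gblock d p u v w r) = d+1" "dim_col (gblock d p u v w r) = d+1"
  unfolding gblock_def by auto

lemma gblock_index: "i < d+1 \<Longrightarrow> j < d+1 \<Longrightarrow> gblock d p u v w r $$ (i,j) =
   (if i < d \<and> j < d then (if i = j then p else 0) + u * v$i * v$j
     else if i < d then w * v $ i
     else if j < d then w * v $ j
     else r)"
  unfolding gblock_def by auto

lemma gblock_transpose: "transpose_mat (gblock d p u v w r) = gblock d p u v w r"
  by (rule eq_matI, auto simp: gblock_index)

lemma sum_split_last: "(\<Sum>j\<in>{0..<(d::nat)+1}. f j) = (\<Sum>j<d. f j) + (f d :: 'a::comm_monoid_add)"
proof -
  have "{0..<d+1} = insert d {..<d}" by auto
  then show ?thesis by (simp add: add.commute)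
qed

lemma gblock_mult_vec:
  fixes z :: "'a::real_field vec"
  assumes z: "z \<in> carrier_vec (d+1)" and i: "i < d+1"
  shows "(map_mat of_real (gblock d p u v w r) *\<^sub>v z) $ i =
    (if i < d then of_real p * z$i + of_real u * of_real (v$i) * (\<Sum>j<d. of_real (v$j) * z$j) + of_real (w * v$i) * z$d
     else of_real w * (\<Sum>j<d. of_real (v$j) * z$j) + of_real r * z$d)"
proof -
  have "(map_mat of_real (gblock d p u v w r) *\<^sub>v z) $ i = (\<Sum>j\<in>{0..<d+1}. of_real (gblock d p u v w r $$ (i,j)) * z$j)"
    using i z by (simp add: scalar_prod_def row_def)
  also have "\<dots> = (\<Sum>j<d. of_real (gblock d p u v w r $$ (i,j)) * z$j) + of_real (gblock d p u v w r $$ (i,d)) * z$d"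
    by (rule sum_split_last)
  also have "\<dots> = (if i < d then of_real p * z$i + of_real u * of_real (v$i) * (\<Sum>j<d. of_real (v$j) * z$j) + of_real (w * v$i) * z$d
     else of_real w * (\<Sum>j<d. of_real (v$j) * z$j) + of_real r * z$d)"
  proof (cases "i < d")
    case True
    have "(\<Sum>j<d. of_real (gblock d p u v w r $$ (i,j)) * z$j)
      = (\<Sum>j<d. (if i = j then of_real p * z$j else 0) + of_real u * of_real (v$i) * (of_real (v$j) * z$j))"
      using True i by (intro sum.cong refl, auto simp: gblock_index algebra_simps)
    also have "\<dots> = of_real p * z$i + of_real u * of_real (v$i) * (\<Sum>j<d. of_real (v$j) * z$j)"
      using True by (simp add: sum.distrib sum_distrib_left)
    finally show ?thesis using True by (simp add: gblock_index)
  next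
    case False
    hence id: "i = d" using i by auto
    have "(\<Sum>j<d. of_real (gblock d p u v w r $$ (i,j)) * z$j) = (\<Sum>j<d. of_real w * (of_real (v$j) * z$j))"
      using id by (intro sum.cong refl, auto simp: gblock_index algebra_simps)
    then show ?thesis using id by (simp add: gblock_index sum_distrib_left)
  qed
  finally show ?thesis .
qed

lemma gblock_mult_vec_real:
  fixes z :: "real vec"
  assumes z: "z \<in> carrier_vec (d+1)" and i: "i < d+1"
  shows "(gblock d p u v w r *\<^sub>v z) $ i =
    (if i < d then p * z$i + u * v$i * (\<Sum>j<d. v$j * z$j) + w * v$i * z$d
     else w * (\<Sum>j<d. v$j * z$j) + r * z$d)"
proof -
  have "map_mat of_real (gblock d p u v w r) = gblock d p u v w r"
    by (rule eq_matI, auto)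
  with gblock_mult_vec[OF z i, of p u v w r] show ?thesis by simp
qed

lemma gblock_qf:
  fixes z :: "real vec"
  assumes z: "z \<in> carrier_vec (d+1)"
  shows "z \<bullet> (gblock d p u v w r *\<^sub>v z) =
    p * (\<Sum>i<d. (z$i)^2) + u * (\<Sum>j<d. v$j * z$j)^2 + 2 * w * z$d * (\<Sum>j<d. v$j * z$j) + r * (z$d)^2"
proof -
  let ?Y = "\<Sum>j<d. v$j * z$j"
  have "z \<bullet> (gblock d p u v w r *\<^sub>v z) = (\<Sum>i\<in>{0..<d+1}. (gblock d p u v w r *\<^sub>v z) $ i * z $ i)"
    unfolding scalar_prod_def using z by (simp add: mult.commute)
  also have "\<dots> = (\<Sum>i<d. (gblock d p u v w r *\<^sub>v z) $ i * z $ i) + (gblock d p u v w r *\<^sub>v z) $ d * z $ d"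
    by (rule sum_split_last)
  also have "(\<Sum>i<d. (gblock d p u v w r *\<^sub>v z) $ i * z $ i) = (\<Sum>i<d. p * (z$i)^2 + u * ?Y * (v$i * z$i) + w * z$d * (v$i * z$i))"
  proof (intro sum.cong refl)
    fix i assume "i \<in> {..<d}"
    then show "(gblock d p u v w r *\<^sub>v z) $ i * z $ i = p * (z$i)^2 + u * ?Y * (v$i * z$i) + w * z$d * (v$i * z$i)"
      by (subst gblock_mult_vec_real[OF z], simp, simp add: algebra_simps power2_eq_square)
  qed
  also have "\<dots> = p * (\<Sum>i<d. (z$i)^2) + u * ?Y * ?Y + w * z$d * ?Y"
    by (simp only: sum.distrib sum_distrib_left[symmetric])
  also have "(gblock d p u v w r *\<^sub>v z) $ d = w * ?Y + r * z$d"
    by (subst gblock_mult_vec_real[OF z], auto)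
  finally have e: "z \<bullet> (gblock d p u v w r *\<^sub>v z) = p * (\<Sum>i<d. (z$i)^2) + u * ?Y * ?Y + w * z$d * ?Y + (w * ?Y + r * z$d) * z$d" .
  have alg: "\<And>X Y t::real. p*X + u*Y*Y + w*t*Y + (w*Y+r*t)*t = p*X + u*Y^2 + 2*w*t*Y + r*t^2"
    by (simp add: algebra_simps power2_eq_square)
  show ?thesis unfolding e by (rule alg)
qed



lemma sp_sum: "a \<in> carrier_vec d \<Longrightarrow> b \<in> carrier_vec d \<Longrightarrow> a \<bullet> b = (\<Sum>i<d. a$i * b$i)"
  by (simp add: scalar_prod_def atLeast0LessThan)

lemma gblock_colsum:
  assumes v: "v \<in> carrier_vec d" and j: "j < d+1"
  shows "(\<Sum>k<d. v$k * col (gblock d p u v w r) j $ k) = (if j < d then (p + u * (v \<bullet> v)) * v$j else w * (v \<bullet> v))"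
proof (cases "j < d")
  case True
  have "(\<Sum>k<d. v$k * col (gblock d p u v w r) j $ k) = (\<Sum>k<d. (if k = j then p * v$j else 0) + u * v$j * (v$k * v$k))"
    using True by (intro sum.cong refl, auto simp: gblock_index algebra_simps)
  also have "\<dots> = p * v$j + u * v$j * (v \<bullet> v)"
    using True v by (simp add: sum.distrib sum_distrib_left sp_sum)
  finally show ?thesis using True by (simp add: algebra_simps)
next
  case False
  hence jd: "j = d" using j by auto
  have "(\<Sum>k<d. v$k * col (gblock d p u v w r) j $ k) = (\<Sum>k<d. w * (v$k * v$k))"
    using jd by (intro sum.cong refl, auto simp: gblock_index algebra_simps)
  also have "\<dots> = w * (v \<bullet> v)" using v by (simp add: sum_distrib_left sp_sum)
  finally show ?thesis using jd by simp
qed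

lemma gblock_sq:
  assumes v: "v \<in> carrier_vec d"
  shows "gblock d p u v w r * gblock d p u v w r =
    gblock d (p^2) (2*p*u + u^2*(v \<bullet> v) + w^2) v (w*(p + u*(v \<bullet> v) + r)) (w^2*(v \<bullet> v) + r^2)"
    (is "?G * ?G = ?H")
proof (rule eq_matI)
  fix i j assume i: "i < dim_row ?H" and j: "j < dim_col ?H"
  hence i: "i < d+1" and j: "j < d+1" by auto
  have "(?G * ?G) $$ (i,j) = col (?G * ?G) j $ i" using i j by simp
  also have "col (?G * ?G) j = ?G *\<^sub>v col ?G j"
    using j by (intro col_mult2[of _ "d+1" "d+1" _ "d+1"], auto)
  also have "(?G *\<^sub>v col ?G j) $ i = (if i < d then p * col ?G j $i + u * v$i * (\<Sum>k<d. v$k * col ?G j $k) + w * v$i * col ?G j $ d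
     else w * (\<Sum>k<d. v$k * col ?G j $k) + r * col ?G j $ d)"
    using i j by (intro gblock_mult_vec_real, auto simp: col_def)
  also have "\<dots> = ?H $$ (i,j)"
    unfolding gblock_colsum[OF v j] using i j
    by (auto simp: gblock_index power2_eq_square algebra_simps)
  finally show "(?G * ?G) $$ (i,j) = ?H $$ (i,j)" .
qed auto

lemma gblock_zero_vec: "gblock d p u (0\<^sub>v d) w r = gblock d p u' (0\<^sub>v d) w' r"
  by (rule eq_matI, auto simp: gblock_index)



lemma sum_sq_zero: assumes "(\<Sum>i<(d::nat). (f i)^2) = (0::real)" "i < d" shows "f i = 0"
proof -
  have "(\<Sum>i<d. (f i)^2) = 0 \<longleftrightarrow> (\<forall>x\<in>{..<d}. (f x)^2 = 0)" by (rule sum_nonneg_eq_0_iff) auto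
  hence "\<forall>x\<in>{..<d}. (f x)^2 = 0" using assms(1) by blast
  thus ?thesis using assms(2) by simp
qed

lemma cs_sum:
  fixes a z :: "nat \<Rightarrow> real" and d :: nat
  shows "(\<Sum>i<d. a i * z i)^2 \<le> (\<Sum>i<d. (a i)^2) * (\<Sum>i<d. (z i)^2)"
proof -
  define n where "n = (\<Sum>i<d. (a i)^2)"
  define X where "X = (\<Sum>i<d. (z i)^2)"
  define Y where "Y = (\<Sum>i<d. a i * z i)"
  have "(\<Sum>i<d. (n * z i - Y * a i)^2) = (\<Sum>i<d. n^2 * (z i)^2 - 2*n*Y * (a i * z i) + Y^2 * (a i)^2)"
    by (intro sum.cong refl, simp add: power2_eq_square algebra_simps)
  also have "\<dots> = (\<Sum>i<d. n^2 * (z i)^2) - (\<Sum>i<d. 2*n*Y * (a i * z i)) + (\<Sum>i<d. Y^2 * (a i)^2)"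
    by (subst sum.distrib, subst sum_subtractf, rule refl)
  also have "(\<Sum>i<d. n^2 * (z i)^2) = n^2 * X"
    by (simp only: sum_distrib_left[symmetric]) (simp only: X_def)
  also have "(\<Sum>i<d. 2*n*Y * (a i * z i)) = 2*n*Y*Y"
    by (simp only: sum_distrib_left[symmetric]) (simp only: Y_def)
  also have "(\<Sum>i<d. Y^2 * (a i)^2) = Y^2 * n"
    by (simp only: sum_distrib_left[symmetric]) (simp only: n_def)
  also have "n^2 * X - 2*n*Y*Y + Y^2 * n = n * (n * X - Y^2)"
    by (simp add: power2_eq_square algebra_simps)
  finally have e: "(\<Sum>i<d. (n * z i - Y * a i)^2) = n * (n * X - Y^2)" .
  have "0 \<le> (\<Sum>i<d. (n * z i - Y * a i)^2)" by (intro sum_nonneg, auto)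
  hence ge: "0 \<le> n * (n * X - Y^2)" using e by simp
  show ?thesis
  proof (cases "n = 0")
    case True
    hence "\<And>i. i < d \<Longrightarrow> a i = 0" using sum_sq_zero[where d=d and f=a] unfolding n_def by blast
    hence "Y = 0" unfolding Y_def by (intro sum.neutral) auto
    thus ?thesis using True unfolding n_def[symmetric] Y_def[symmetric] X_def[symmetric] by simp
  next
    case False
    have "n \<ge> 0" unfolding n_def by (intro sum_nonneg, auto)
    with False have "n > 0" by auto
    with ge have "0 \<le> n * X - Y^2" by (simp add: zero_le_mult_iff)
    thus ?thesis unfolding n_def[symmetric] Y_def[symmetric] X_def[symmetric] by simp
  qed
qed

lemma zero_vec_from_sums:
  fixes z :: "real vec"
  assumes z: "z \<in> carrier_vec (d+1)" and X: "(\<Sum>i<d. (z$i)^2) = 0" and t: "z$d = 0"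
  shows "z = 0\<^sub>v (d+1)"
proof (rule eq_vecI)
  fix i assume "i < dim_vec (0\<^sub>v (d+1) :: real vec)"
  hence "i < d+1" by simp
  then show "z $ i = 0\<^sub>v (d+1) $ i"
    using sum_sq_zero[where f="\<lambda>i. z$i", OF X, of i] t by (cases "i < d") (auto simp: less_Suc_eq)
qed (use z in auto)

lemma sqrt_exists:
  assumes a: "a \<in> carrier_vec d" and al0: "al0 > 0" and pd: "2*(a \<bullet> a) < al0*al1"
  shows "\<exists>S. pos_def_mat (d+1) S \<and> S * S = block_mat d al0 a al1"
proof -
  define n where "n = a \<bullet> a"
  have n0: "n \<ge> 0" unfolding n_def sp_sum[OF a a] by (intro sum_nonneg, auto)
  have "al0 * al1 > 0" using pd n0 unfolding n_def[symmetric] by linarith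
  hence al1: "al1 > 0" using al0 zero_less_mult_pos by blast
  define sg where "sg = sqrt al0"
  define dl where "dl = sqrt (2*al0*al1 - 4*n)"
  define ta where "ta = sqrt (al0 + 2*al1 + 2*dl)"
  define ka where "ka = (al0 + dl) / ta"
  define r where "r = (2*al1 + dl) / ta"
  define w where "w = -2 / ta"
  define u where "u = (ka - sg) / n"
  have sg: "sg > 0" "sg^2 = al0" unfolding sg_def using al0 by auto
  have dl: "dl > 0" "dl^2 = 2*al0*al1 - 4*n" unfolding dl_def using pd n_def by auto
  have ta: "ta > 0" "ta^2 = al0 + 2*al1 + 2*dl" unfolding ta_def using al0 al1 dl by auto
  have ka: "ka > 0" unfolding ka_def using al0 dl ta by auto
  have r: "r > 0" unfolding r_def using al1 dl ta by auto
  have kat: "ka * ta = al0 + dl" unfolding ka_def using ta by simp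
  have rt: "r * ta = 2*al1 + dl" unfolding r_def using ta by simp
  have wt: "w * ta = -2" unfolding w_def using ta by simp
  have P3: "w^2 * n + r^2 = 2*al1"
  proof -
    have "ta^2 * (w^2 * n + r^2) = (w*ta)^2 * n + (r*ta)^2" by (simp add: power2_eq_square algebra_simps)
    also have "\<dots> = ta^2 * (2*al1)" unfolding wt rt ta(2) using dl(2) by (simp add: power2_eq_square algebra_simps)
    finally show ?thesis using ta(1) by simp
  qed
  have P4: "ka * r = w^2 * n + dl"
  proof -
    have "ta^2 * (ka * r) = (ka*ta)*(r*ta)" by (simp add: power2_eq_square algebra_simps)
    also have "\<dots> = ta^2 * (w^2 * n + dl)" unfolding kat rt
    proof -
      have "ta^2 * (w^2 * n + dl) = (w*ta)^2 * n + ta^2 * dl" by (simp add: power2_eq_square algebra_simps)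
      also have "\<dots> = (al0 + dl) * (2 * al1 + dl)" unfolding wt ta(2) using dl(2) by (simp add: power2_eq_square algebra_simps)
      finally show "(al0 + dl) * (2 * al1 + dl) = ta^2 * (w^2 * n + dl)" by simp
    qed
    finally show ?thesis using ta(1) by simp
  qed
  define S where "S = gblock d sg u a w r"
  have SS: "S * S = block_mat d al0 a al1"
  proof (cases "n = 0")
    case True
    have "a = 0\<^sub>v d"
    proof (rule eq_vecI)
      fix i assume "i < dim_vec (0\<^sub>v d :: real vec)"
      thus "a $ i = 0\<^sub>v d $ i" using sum_sq_zero[where d=d and f="\<lambda>i. a$i" and i=i] True unfolding n_def sp_sum[OF a a]
        by (simp add: power2_eq_square)
    qed (use a in auto)
    then show ?thesis unfolding S_def block_gblock gblock_sq[OF a] n_def[symmetric]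
      using True P3 sg(2) gblock_zero_vec by simp
  next
    case False
    hence np: "n > 0" using n0 by auto
    have un: "u * n = ka - sg" unfolding u_def using np by simp
    have P1: "2*sg*u + u^2*n + w^2 = 0"
    proof -
      have "n * ta^2 * (2*sg*u + u^2*n + w^2) = ta^2 * (2*sg*(u*n) + (u*n)^2) + n * (w*ta)^2"
        by (simp add: power2_eq_square algebra_simps)
      also have "\<dots> = ta^2 * ((ka + sg) * (ka - sg)) + n * 4" unfolding un wt
        by (simp add: power2_eq_square algebra_simps)
      also have "\<dots> = (ka*ta)^2 - sg^2 * ta^2 + 4 * n" by (simp add: power2_eq_square algebra_simps)
      also have "\<dots> = 0" unfolding kat sg(2) ta(2) using dl(2) by (simp add: power2_eq_square algebra_simps)
      finally show ?thesis using np ta(1) by simp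
    qed
    have P2: "w * (sg + u*n + r) = -2"
    proof -
      have "ta^2 * (w * (sg + u*n + r)) = (w*ta) * (ka*ta + r*ta)" unfolding un by (simp add: power2_eq_square algebra_simps)
      also have "\<dots> = ta^2 * (-2)" unfolding wt kat rt ta(2) by simp
      finally have "ta^2 * (w * (sg + u*n + r)) = ta^2 * (-2)" .
      moreover have "ta^2 \<noteq> 0" using ta(1) by simp
      ultimately show ?thesis using mult_left_cancel by blast
    qed
    show ?thesis unfolding S_def block_gblock gblock_sq[OF a] n_def[symmetric]
      using P1 P2 P3 sg(2) by simp
  qed
  have PD: "pos_def_mat (d+1) S"
    unfolding pos_def_mat_def
  proof (intro conjI ballI impI)
    show "S \<in> carrier_mat (d+1) (d+1)" "transpose_mat S = S" unfolding S_def by (auto simp: gblock_transpose)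
    fix z :: "real vec" assume z: "z \<in> carrier_vec (d+1)" and z0: "z \<noteq> 0\<^sub>v (d+1)"
    define X where "X = (\<Sum>i<d. (z$i)^2)"
    define Y where "Y = (\<Sum>j<d. a$j * z$j)"
    define t where "t = z$d"
    have X0: "X \<ge> 0" unfolding X_def by (intro sum_nonneg, auto)
    have nz: "\<not> (X = 0 \<and> t = 0)" using zero_vec_from_sums[OF z] z0 unfolding X_def t_def by auto
    have cs: "Y^2 \<le> n * X" unfolding Y_def X_def n_def sp_sum[OF a a] using cs_sum[of "\<lambda>i. a$i" "\<lambda>i. z$i" d]
      by (simp add: power2_eq_square)
    have qf: "z \<bullet> (S *\<^sub>v z) = sg * X + u * Y^2 + 2 * w * t * Y + r * t^2"
      unfolding S_def X_def Y_def t_def by (rule gblock_qf[OF z])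
    show "z \<bullet> (S *\<^sub>v z) > 0"
    proof (cases "n = 0")
      case True
      hence "Y = 0" using cs by simp
      hence "z \<bullet> (S *\<^sub>v z) = sg * X + r * t^2" unfolding qf by simp
      moreover have "sg * X + r * t^2 > 0"
      proof (cases "t = 0")
        case True
        with nz X0 have "X > 0" by auto
        with sg True show ?thesis by simp
      next
        case False
        hence "r * t^2 > 0" using r by simp
        moreover have "sg * X \<ge> 0" using sg X0 by simp
        ultimately show ?thesis by simp
      qed
      ultimately show ?thesis by simp
    next
      case False
      hence np: "n > 0" using n0 by auto
      have un: "u * n = ka - sg" unfolding u_def using np by simp
      have key: "n * ka * (z \<bullet> (S *\<^sub>v z)) = ka * sg * (n * X - Y^2) + (ka * Y + n * w * t)^2 + n * dl * t^2"
      proof -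
        have "n * ka * (z \<bullet> (S *\<^sub>v z)) = n * ka * sg * X + ka * (u * n) * Y^2 + 2 * n * ka * w * t * Y + n * (ka * r) * t^2"
          unfolding qf by (simp add: algebra_simps power2_eq_square)
        also have "\<dots> = ka * sg * (n * X - Y^2) + (ka * Y + n * w * t)^2 + n * dl * t^2"
          unfolding un P4 by (simp add: algebra_simps power2_eq_square)
        finally show ?thesis .
      qed
      have t1: "ka * sg * (n * X - Y^2) \<ge> 0" using ka sg cs by simp
      have t2: "(ka * Y + n * w * t)^2 \<ge> 0" by simp
      have t3: "n * dl * t^2 \<ge> 0" using np dl by simp
      show ?thesis
      proof (rule ccontr)
        assume "\<not> ?thesis"
        hence "n * ka * (z \<bullet> (S *\<^sub>v z)) \<le> 0" using np ka by (simp add: mult_nonneg_nonpos)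
        hence e1: "ka * sg * (n * X - Y^2) = 0" and e2: "(ka * Y + n * w * t)^2 = 0" and e3: "n * dl * t^2 = 0"
          using t1 t2 t3 key by linarith+
        from e3 np dl have "t = 0" by simp
        with e2 ka have "Y = 0" by simp
        with e1 ka sg np have "X = 0" by simp
        with \<open>t = 0\<close> nz show False by simp
      qed
    qed
  qed
  from PD SS show ?thesis by blast
qed



lemma pd_nonneg: assumes "pos_def_mat n S" "x \<in> carrier_vec n" shows "x \<bullet> (S *\<^sub>v x) \<ge> 0"
proof (cases "x = 0\<^sub>v n")
  case True
  have "S \<in> carrier_mat n n" using assms(1) unfolding pos_def_mat_def by auto
  then show ?thesis using True by simp
next
  case False
  then show ?thesis using assms unfolding pos_def_mat_def by (auto intro: less_imp_le)
qed

lemma sym_entry: assumes "S \<in> carrier_mat n n" "transpose_mat S = S" "i < n" "j < n"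
  shows "S $$ (i,j) = S $$ (j,i)"
proof -
  have "transpose_mat S $$ (i,j) = S $$ (j,i)" using assms(1,3,4) by simp
  thus ?thesis unfolding assms(2) .
qed

lemma pd_sqrt_unique:
  assumes S: "pos_def_mat n S" and T: "pos_def_mat n T" and ST: "S * S = T * T"
  shows "S = T"
proof -
  have Sc: "S \<in> carrier_mat n n" and Ss: "transpose_mat S = S" using S unfolding pos_def_mat_def by auto
  have Tc: "T \<in> carrier_mat n n" and Ts: "transpose_mat T = T" using T unfolding pos_def_mat_def by auto
  define D where "D = S - T"
  have Dc: "D \<in> carrier_mat n n" unfolding D_def using Sc Tc by auto
  have Dij: "\<And>i j. i < n \<Longrightarrow> j < n \<Longrightarrow> D $$ (i,j) = S $$ (i,j) - T $$ (i,j)"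
    unfolding D_def using Sc Tc by auto
  have Ssym: "\<And>i j. i < n \<Longrightarrow> j < n \<Longrightarrow> S $$ (i,j) = S $$ (j,i)" using sym_entry[OF Sc Ss] by blast
  have Tsym: "\<And>i j. i < n \<Longrightarrow> j < n \<Longrightarrow> T $$ (i,j) = T $$ (j,i)" using sym_entry[OF Tc Ts] by blast
  have Dsym: "\<And>i j. i < n \<Longrightarrow> j < n \<Longrightarrow> D $$ (i,j) = D $$ (j,i)" using Dij Ssym Tsym by simp
  define sd where "sd i j = (\<Sum>k<n. S $$ (i,k) * D $$ (k,j))" for i j
  define dt where "dt i j = (\<Sum>k<n. D $$ (i,k) * T $$ (k,j))" for i j
  define td where "td i j = (\<Sum>k<n. T $$ (i,k) * D $$ (k,j))" for i j
  have ss: "\<And>i j. i < n \<Longrightarrow> j < n \<Longrightarrow> (\<Sum>k<n. S $$ (i,k) * S $$ (k,j)) = (\<Sum>k<n. T $$ (i,k) * T $$ (k,j))"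
  proof -
    fix i j assume "i < n" "j < n"
    hence "(S * S) $$ (i,j) = (T * T) $$ (i,j)" using ST by simp
    thus "(\<Sum>k<n. S $$ (i,k) * S $$ (k,j)) = (\<Sum>k<n. T $$ (i,k) * T $$ (k,j))"
      using \<open>i < n\<close> \<open>j < n\<close> Sc Tc by (simp add: scalar_prod_def atLeast0LessThan)
  qed
  have zero: "\<And>i j. i < n \<Longrightarrow> j < n \<Longrightarrow> sd i j + dt i j = 0"
  proof -
    fix i j assume ij: "i < n" "j < n"
    have "sd i j + dt i j = (\<Sum>k<n. S $$ (i,k) * S $$ (k,j) - T $$ (i,k) * T $$ (k,j))"
      unfolding sd_def dt_def sum.distrib[symmetric]
      by (intro sum.cong refl, simp add: Dij ij algebra_simps)
    also have "\<dots> = 0" using ss[OF ij] by (simp add: sum_subtractf)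
    finally show "sd i j + dt i j = 0" .
  qed
  have tddt: "\<And>i j. i < n \<Longrightarrow> j < n \<Longrightarrow> td i j = dt j i"
    unfolding td_def dt_def using Tsym Dsym by (intro sum.cong refl, simp add: mult.commute)
  define qS where "qS j = col D j \<bullet> (S *\<^sub>v col D j)" for j
  define qT where "qT j = col D j \<bullet> (T *\<^sub>v col D j)" for j
  have qS: "\<And>j. j < n \<Longrightarrow> qS j = (\<Sum>i<n. D $$ (i,j) * sd i j)"
    unfolding qS_def sd_def using Sc Dc by (simp add: scalar_prod_def atLeast0LessThan)
  have qT: "\<And>j. j < n \<Longrightarrow> qT j = (\<Sum>i<n. D $$ (i,j) * td i j)"
    unfolding qT_def td_def using Tc Dc by (simp add: scalar_prod_def atLeast0LessThan)
  have "(\<Sum>j<n. qT j) = (\<Sum>j<n. \<Sum>i<n. D $$ (i,j) * dt j i)"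
    using qT tddt by (intro sum.cong refl, simp)
  also have "\<dots> = (\<Sum>i<n. \<Sum>j<n. D $$ (i,j) * dt j i)" by (rule sum.swap)
  also have "\<dots> = (\<Sum>j<n. \<Sum>i<n. D $$ (i,j) * dt i j)"
    using Dsym by (intro sum.cong refl, simp)
  finally have sT: "(\<Sum>j<n. qT j) = (\<Sum>j<n. \<Sum>i<n. D $$ (i,j) * dt i j)" .
  have sS: "(\<Sum>j<n. qS j) = (\<Sum>j<n. \<Sum>i<n. D $$ (i,j) * sd i j)"
    using qS by (intro sum.cong refl) simp
  have "(\<Sum>j<n. qS j + qT j) = (\<Sum>j<n. \<Sum>i<n. D $$ (i,j) * sd i j) + (\<Sum>j<n. \<Sum>i<n. D $$ (i,j) * dt i j)"
    unfolding sum.distrib sS sT ..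
  also have "\<dots> = (\<Sum>j<n. \<Sum>i<n. D $$ (i,j) * (sd i j + dt i j))"
    by (simp only: distrib_left sum.distrib)
  also have "\<dots> = 0"
  proof (rule sum.neutral, rule ballI, rule sum.neutral, rule ballI)
    fix j i assume "j \<in> {..<n}" "i \<in> {..<n}"
    thus "D $$ (i,j) * (sd i j + dt i j) = 0" using zero by simp
  qed
  finally have tot: "(\<Sum>j<n. qS j + qT j) = 0" .
  have nn: "\<And>j. j < n \<Longrightarrow> qS j \<ge> 0 \<and> qT j \<ge> 0"
    unfolding qS_def qT_def using pd_nonneg[OF S] pd_nonneg[OF T] Dc by auto
  have "(\<Sum>j<n. qS j + qT j) = 0 \<longleftrightarrow> (\<forall>j\<in>{..<n}. qS j + qT j = 0)"
    by (rule sum_nonneg_eq_0_iff) (use nn in auto)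
  hence all0: "\<forall>j\<in>{..<n}. qS j + qT j = 0" using tot by blast
  have qS0: "\<And>j. j < n \<Longrightarrow> qS j = 0"
  proof -
    fix j assume j: "j < n"
    hence "qS j + qT j = 0" using all0 by blast
    thus "qS j = 0" using nn[OF j] by linarith
  qed
  have col0: "\<And>j. j < n \<Longrightarrow> col D j = 0\<^sub>v n"
  proof (rule ccontr)
    fix j assume j: "j < n" and ne: "col D j \<noteq> 0\<^sub>v n"
    have "col D j \<in> carrier_vec n" using Dc by auto
    hence "qS j > 0" using S ne unfolding pos_def_mat_def qS_def by auto
    with qS0[OF j] show False by simp
  qed
  show "S = T"
  proof (rule eq_matI)
    fix i j assume "i < dim_row T" "j < dim_col T"
    hence ij: "i < n" "j < n" using Tc by auto
    have "D $$ (i,j) = col D j $ i" using Dc ij by simp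
    also have "\<dots> = 0" using col0[OF ij(2)] ij by simp
    finally show "S $$ (i,j) = T $$ (i,j)" using Dij[OF ij] by simp
  qed (use Sc Tc in auto)
qed

lemma pd_inv_exists:
  assumes S: "pos_def_mat n S"
  shows "\<exists>B \<in> carrier_mat n n. S * B = 1\<^sub>m n \<and> B * S = 1\<^sub>m n"
proof -
  have Sc: "S \<in> carrier_mat n n" using S unfolding pos_def_mat_def by auto
  have "det S \<noteq> 0"
  proof
    assume "det S = 0"
    then obtain v where v: "v \<in> carrier_vec n" "v \<noteq> 0\<^sub>v n" "S *\<^sub>v v = 0\<^sub>v n"
      using det_0_iff_vec_prod_zero[OF Sc] by auto
    hence "v \<bullet> (S *\<^sub>v v) > 0" using S unfolding pos_def_mat_def by auto
    with v show False by simp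
  qed
  from det_non_zero_imp_unit[OF Sc this, of undefined]
  show ?thesis unfolding Units_def ring_mat_simps by auto
qed

lemma mat_inv_eq:
  assumes Sc: "S \<in> carrier_mat n n" and B: "B \<in> carrier_mat n n" "S * B = 1\<^sub>m n" "B * S = 1\<^sub>m n"
  shows "mat_inv n S = B"
  unfolding mat_inv_def
proof (rule the_equality)
  show "B \<in> carrier_mat n n \<and> S * B = 1\<^sub>m n \<and> B * S = 1\<^sub>m n" using B by auto
  fix C assume C: "C \<in> carrier_mat n n \<and> S * C = 1\<^sub>m n \<and> C * S = 1\<^sub>m n"
  hence Cc: "C \<in> carrier_mat n n" "C * S = 1\<^sub>m n" by auto
  have "C = C * (S * B)" using Cc B by simp
  also have "\<dots> = (C * S) * B" by (rule assoc_mult_mat[symmetric, OF Cc(1) Sc B(1)])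
  also have "\<dots> = B" using Cc B by simp
  finally show "C = B" .
qed

lemma pd_sqrt_eq:
  assumes "pos_def_mat n S" "S * S = A"
  shows "pd_sqrt n A = S"
  unfolding pd_sqrt_def
proof (rule the_equality)
  show "pos_def_mat n S \<and> S * S = A" using assms by auto
  fix T assume "pos_def_mat n T \<and> T * T = A"
  thus "T = S" using pd_sqrt_unique[of n T S] assms by auto
qed



lemma sq_expand:
  fixes f g :: "nat \<Rightarrow> real" and d :: nat
  shows "(\<Sum>i<d. (p * f i - q * g i)^2) = p^2 * (\<Sum>i<d. (f i)^2) - 2*p*q * (\<Sum>i<d. f i * g i) + q^2 * (\<Sum>i<d. (g i)^2)"
proof -
  have "(\<Sum>i<d. (p * f i - q * g i)^2) = (\<Sum>i<d. p^2 * (f i)^2 - 2*p*q * (f i * g i) + q^2 * (g i)^2)"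
    by (intro sum.cong refl, simp add: power2_eq_square algebra_simps)
  also have "\<dots> = (\<Sum>i<d. p^2 * (f i)^2) - (\<Sum>i<d. 2*p*q * (f i * g i)) + (\<Sum>i<d. q^2 * (g i)^2)"
    by (subst sum.distrib, subst sum_subtractf, rule refl)
  also have "\<dots> = p^2 * (\<Sum>i<d. (f i)^2) - 2*p*q * (\<Sum>i<d. f i * g i) + q^2 * (\<Sum>i<d. (g i)^2)"
    by (simp only: sum_distrib_left[symmetric])
  finally show ?thesis .
qed

lemma lin_expand:
  fixes f g z :: "nat \<Rightarrow> real" and d :: nat
  shows "(\<Sum>i<d. (p * f i - q * g i) * z i) = p * (\<Sum>i<d. f i * z i) - q * (\<Sum>i<d. g i * z i)"
proof -
  have "(\<Sum>i<d. (p * f i - q * g i) * z i) = (\<Sum>i<d. p * (f i * z i) - q * (g i * z i))"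
    by (intro sum.cong refl, simp add: algebra_simps)
  also have "\<dots> = (\<Sum>i<d. p * (f i * z i)) - (\<Sum>i<d. q * (g i * z i))"
    by (rule sum_subtractf)
  also have "\<dots> = p * (\<Sum>i<d. f i * z i) - q * (\<Sum>i<d. g i * z i)"
    by (simp only: sum_distrib_left[symmetric])
  finally show ?thesis .
qed

lemma ray:
  fixes a b z :: "nat \<Rightarrow> real" and d :: nat
  assumes c: "mu * alz - bez > 0"
    and q: "2 * (mu * alz - bez) * (mu * alo - beo) - 4 * (\<Sum>i<d. (mu * a i - 1 * b i)^2) \<ge> 0"
  shows "mu * (alz * (\<Sum>i<d. (z i)^2) - 4 * t * (\<Sum>i<d. a i * z i) + 2 * alo * t^2)
       - (bez * (\<Sum>i<d. (z i)^2) - 4 * t * (\<Sum>i<d. b i * z i) + 2 * beo * t^2) \<ge> 0"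
proof -
  define c where "c = mu * alz - bez"
  define v where "v i = mu * a i - 1 * b i" for i
  define X where "X = (\<Sum>i<d. (z i)^2)"
  define U where "U = (\<Sum>i<d. (v i)^2)"
  define Yv where "Yv = (\<Sum>i<d. v i * z i)"
  have Yv: "Yv = mu * (\<Sum>i<d. a i * z i) - 1 * (\<Sum>i<d. b i * z i)"
    unfolding Yv_def v_def by (rule lin_expand)
  have sq0: "(\<Sum>i<d. (c * z i - (2*t) * v i)^2) = c^2 * X - 2*c*(2*t) * (\<Sum>i<d. z i * v i) + (2*t)^2 * U"
    unfolding X_def U_def by (rule sq_expand)
  have "(\<Sum>i<d. z i * v i) = Yv" unfolding Yv_def by (simp add: mult.commute)
  with sq0 have sq: "(\<Sum>i<d. (c * z i - (2*t) * v i)^2) = c^2 * X - 2*c*(2*t) * Yv + (2*t)^2 * U" by simp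
  have "0 \<le> (\<Sum>i<d. (c * z i - (2*t) * v i)^2)" by (intro sum_nonneg, auto)
  hence A: "0 \<le> c^2 * X - 4*c*t*Yv + 4*t^2*U" unfolding sq by (simp add: power2_eq_square algebra_simps)
  have B: "0 \<le> t^2 * (2 * c * (mu * alo - beo) - 4 * U)" using q unfolding c_def U_def v_def by simp
  have "c * (c * X - 4 * t * Yv + 2 * (mu * alo - beo) * t^2) = (c^2 * X - 4*c*t*Yv + 4*t^2*U) + t^2 * (2 * c * (mu * alo - beo) - 4 * U)"
    by (simp add: power2_eq_square algebra_simps)
  also have "\<dots> \<ge> 0" using A B by simp
  finally have "0 \<le> c * (c * X - 4 * t * Yv + 2 * (mu * alo - beo) * t^2)" .
  hence "0 \<le> c * X - 4 * t * Yv + 2 * (mu * alo - beo) * t^2"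
    using c unfolding c_def[symmetric] by (simp add: zero_le_mult_iff)
  thus ?thesis unfolding Yv c_def X_def by (simp add: algebra_simps)
qed

lemma two_sum:
  fixes f :: "nat \<Rightarrow> 'a::comm_monoid_add"
  assumes "d \<ge> 2" "\<And>j. 2 \<le> j \<Longrightarrow> j < d \<Longrightarrow> f j = 0"
  shows "(\<Sum>j<d. f j) = f 0 + f 1"
proof -
  have "(\<Sum>j<d. f j) = (\<Sum>j\<in>{0,1}. f j)"
    by (rule sum.mono_neutral_right) (use assms in auto)
  thus ?thesis by simp
qed



lemma block_mult_vec_real:
  fixes z :: "real vec"
  assumes z: "z \<in> carrier_vec (d+1)" and i: "i < d+1"
  shows "(block_mat d c0 v c1 *\<^sub>v z) $ i =
    (if i < d then c0 * z$i - 2 * v$i * z$d else -2 * (\<Sum>j<d. v$j * z$j) + 2 * c1 * z$d)"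
  unfolding block_gblock using gblock_mult_vec_real[OF z i, of c0 0 v "-2" "2*c1"] by simp

lemma block_carrier[simp]: "block_mat d c0 v c1 \<in> carrier_mat (d+1) (d+1)"
  unfolding block_gblock by (rule gblock_carrier)

lemma block_dims[simp]: "dim_row (block_mat d c0 v c1) = d+1" "dim_col (block_mat d c0 v c1) = d+1"
  unfolding block_gblock by auto

lemma gen_eig_real:
  assumes a: "a \<in> carrier_vec d" and b: "b \<in> carrier_vec d" and d2: "d \<ge> 2"
    and h: "l * al0 = be0 \<or> (2*(be0 - l*al0)*(be1 - l*al1) - 4*(\<Sum>i<d. (1 * b$i - l*a$i)^2) = 0)"
  shows "\<exists>w \<in> carrier_vec (d+1). w \<noteq> 0\<^sub>v (d+1) \<and> block_mat d be0 b be1 *\<^sub>v w = l \<cdot>\<^sub>v (block_mat d al0 a al1 *\<^sub>v w)"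
proof (cases "l * al0 = be0")
  case True
  define u where "u i = 1 * b$i - l * a$i" for i
  define x0 where "x0 = (if u 0 = 0 \<and> u 1 = 0 then 1 else u 1)"
  define x1 where "x1 = (if u 0 = 0 \<and> u 1 = 0 then 0 else - u 0)"
  define w where "w = vec (d+1) (\<lambda>i. if i = 0 then x0 else if i = 1 then x1 else (0::real))"
  have wc: "w \<in> carrier_vec (d+1)" unfolding w_def by simp
  have wd: "w $ d = 0" unfolding w_def using d2 by simp
  have w0: "w \<noteq> 0\<^sub>v (d+1)"
  proof
    assume "w = 0\<^sub>v (d+1)"
    hence "w $ 0 = 0" "w $ 1 = 0" using d2 by auto
    hence "x0 = 0" "x1 = 0" unfolding w_def using d2 by auto
    thus False unfolding x0_def x1_def by (auto split: if_splits)
  qed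
  have orth: "(\<Sum>j<d. u j * w $ j) = 0"
  proof -
    have "(\<Sum>j<d. u j * w $ j) = u 0 * w $ 0 + u 1 * w $ 1"
      by (rule two_sum[OF d2]) (use d2 in \<open>auto simp: w_def\<close>)
    also have "\<dots> = u 0 * x0 + u 1 * x1" unfolding w_def using d2 by simp
    also have "\<dots> = 0" unfolding x0_def x1_def by (auto simp: algebra_simps)
    finally show ?thesis .
  qed
  have orth2: "(\<Sum>j<d. b$j * w $ j) = l * (\<Sum>j<d. a$j * w $ j)"
    using orth unfolding u_def lin_expand by simp
  show ?thesis
  proof (intro bexI conjI)
    show "block_mat d be0 b be1 *\<^sub>v w = l \<cdot>\<^sub>v (block_mat d al0 a al1 *\<^sub>v w)"
    proof (rule eq_vecI)
      fix i assume "i < dim_vec (l \<cdot>\<^sub>v (block_mat d al0 a al1 *\<^sub>v w))"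
      hence i: "i < d+1" by simp
      have e2: "(l \<cdot>\<^sub>v (block_mat d al0 a al1 *\<^sub>v w)) $ i = l * (block_mat d al0 a al1 *\<^sub>v w) $ i" using i by simp
      show "(block_mat d be0 b be1 *\<^sub>v w) $ i = (l \<cdot>\<^sub>v (block_mat d al0 a al1 *\<^sub>v w)) $ i"
        unfolding e2 block_mult_vec_real[OF wc i]
        by (auto simp: wd orth2 True[symmetric] algebra_simps)
    qed simp
  qed (use wc w0 in auto)
next
  case False
  define cc where "cc = be0 - l*al0"
  have cc: "cc \<noteq> 0" using False unfolding cc_def by auto
  have q: "2*cc*(be1 - l*al1) - 4*(\<Sum>i<d. (1 * b$i - l*a$i)^2) = 0" using h False unfolding cc_def by auto
  define w where "w = vec (d+1) (\<lambda>i. if i < d then 2*(1 * b$i - l*a$i)/cc else (1::real))"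
  have wc: "w \<in> carrier_vec (d+1)" unfolding w_def by simp
  have wd: "w $ d = 1" unfolding w_def by simp
  have w0: "w \<noteq> 0\<^sub>v (d+1)"
  proof
    assume "w = 0\<^sub>v (d+1)"
    hence "w $ d = 0" by auto
    with wd show False by simp
  qed
  have wi: "\<And>i. i < d \<Longrightarrow> cc * w $ i = 2*(b$i - l*a$i)" unfolding w_def using cc by simp
  have "(\<Sum>j<d. (1 * b$j - l*a$j) * w $ j) = (\<Sum>j<d. (2/cc) * (1 * b$j - l*a$j)^2)"
    unfolding w_def by (intro sum.cong refl, simp add: power2_eq_square)
  also have "\<dots> = (2/cc) * (\<Sum>j<d. (1 * b$j - l*a$j)^2)" by (simp only: sum_distrib_left[symmetric])
  finally have s: "(\<Sum>j<d. b$j * w $ j) - l * (\<Sum>j<d. a$j * w $ j) = (2/cc) * (\<Sum>j<d. (1 * b$j - l*a$j)^2)"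
    unfolding lin_expand by simp
  have s2: "-2 * (\<Sum>j<d. b$j * w $ j) + 2 * be1 = l * (-2 * (\<Sum>j<d. a$j * w $ j) + 2 * al1)"
  proof -
    have "cc * (-2 * (\<Sum>j<d. b$j * w $ j) + 2 * be1 - l * (-2 * (\<Sum>j<d. a$j * w $ j) + 2 * al1))
      = -2 * cc * ((\<Sum>j<d. b$j * w $ j) - l * (\<Sum>j<d. a$j * w $ j)) + 2*cc*(be1 - l*al1)"
      by (simp add: algebra_simps)
    also have "\<dots> = 0" unfolding s using cc q by (simp add: field_simps)
    finally show ?thesis using cc by simp
  qed
  show ?thesis
  proof (intro bexI conjI)
    show "block_mat d be0 b be1 *\<^sub>v w = l \<cdot>\<^sub>v (block_mat d al0 a al1 *\<^sub>v w)"
    proof (rule eq_vecI)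
      fix i assume "i < dim_vec (l \<cdot>\<^sub>v (block_mat d al0 a al1 *\<^sub>v w))"
      hence i: "i < d+1" by simp
      have e2: "(l \<cdot>\<^sub>v (block_mat d al0 a al1 *\<^sub>v w)) $ i = l * (block_mat d al0 a al1 *\<^sub>v w) $ i" using i by simp
      show "(block_mat d be0 b be1 *\<^sub>v w) $ i = (l \<cdot>\<^sub>v (block_mat d al0 a al1 *\<^sub>v w)) $ i"
        unfolding e2 block_mult_vec_real[OF wc i]
      proof (cases "i < d")
        case True
        have "be0 * w $ i - 2 * b $ i = l * (al0 * w $ i - 2 * a $ i)"
          using wi[OF True] unfolding cc_def by (simp add: algebra_simps)
        then show "(if i < d then be0 * w $ i - 2 * b $ i * w $ d else -2 * (\<Sum>j<d. b $ j * w $ j) + 2 * be1 * w $ d) =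
          l * (if i < d then al0 * w $ i - 2 * a $ i * w $ d else -2 * (\<Sum>j<d. a $ j * w $ j) + 2 * al1 * w $ d)"
          using True by (simp add: wd)
      next
        case False
        then show "(if i < d then be0 * w $ i - 2 * b $ i * w $ d else -2 * (\<Sum>j<d. b $ j * w $ j) + 2 * be1 * w $ d) =
          l * (if i < d then al0 * w $ i - 2 * a $ i * w $ d else -2 * (\<Sum>j<d. a $ j * w $ j) + 2 * al1 * w $ d)"
          using s2 by (simp add: wd)
      qed
    qed simp
  qed (use wc w0 in auto)
qed



lemma block_mult_vec_cplx:
  fixes z :: "complex vec"
  assumes z: "z \<in> carrier_vec (d+1)" and i: "i < d+1"
  shows "(map_mat of_real (block_mat d c0 v c1) *\<^sub>v z) $ i =
    (if i < d then of_real c0 * z$i - 2 * of_real (v$i) * z$d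
     else -2 * (\<Sum>j<d. of_real (v$j) * z$j) + 2 * of_real c1 * z$d)"
  unfolding block_gblock using gblock_mult_vec[OF z i, of c0 0 v "-2" "2*c1"] by simp

lemma sum_lin_gen:
  fixes f g z :: "nat \<Rightarrow> 'a::comm_ring_1"
  shows "(\<Sum>j<d. (f j - c * g j) * z j) = (\<Sum>j<d. f j * z j) - c * (\<Sum>j<d. g j * z j)"
proof -
  have "(\<Sum>j<d. (f j - c * g j) * z j) = (\<Sum>j<d. f j * z j - c * (g j * z j))"
    by (intro sum.cong refl, simp add: algebra_simps)
  also have "\<dots> = (\<Sum>j<d. f j * z j) - (\<Sum>j<d. c * (g j * z j))" by (rule sum_subtractf)
  also have "\<dots> = (\<Sum>j<d. f j * z j) - c * (\<Sum>j<d. g j * z j)" by (simp only: sum_distrib_left[symmetric])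
  finally show ?thesis .
qed

lemma sum_sq_gen:
  fixes f g :: "nat \<Rightarrow> 'a::comm_ring_1"
  shows "(\<Sum>j<d. (f j - c * g j)^2) = (\<Sum>j<d. (f j)^2) - 2 * c * (\<Sum>j<d. f j * g j) + c^2 * (\<Sum>j<d. (g j)^2)"
proof -
  have "(\<Sum>j<d. (f j - c * g j)^2) = (\<Sum>j<d. (f j)^2 - 2 * c * (f j * g j) + c^2 * (g j)^2)"
    by (intro sum.cong refl, simp add: power2_eq_square algebra_simps)
  also have "\<dots> = (\<Sum>j<d. (f j)^2) - (\<Sum>j<d. 2 * c * (f j * g j)) + (\<Sum>j<d. c^2 * (g j)^2)"
    by (subst sum.distrib, subst sum_subtractf, rule refl)
  also have "\<dots> = (\<Sum>j<d. (f j)^2) - 2 * c * (\<Sum>j<d. f j * g j) + c^2 * (\<Sum>j<d. (g j)^2)"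
    by (simp only: sum_distrib_left[symmetric])
  finally show ?thesis .
qed

lemma cplx_constraint:
  fixes w :: "complex vec" and c :: complex
  assumes a: "a \<in> carrier_vec d" and b: "b \<in> carrier_vec d"
    and w: "w \<in> carrier_vec (d+1)" and w0: "w \<noteq> 0\<^sub>v (d+1)"
    and eq: "map_mat of_real (block_mat d be0 b be1) *\<^sub>v w = c \<cdot>\<^sub>v (map_mat of_real (block_mat d al0 a al1) *\<^sub>v w)"
  shows "c * of_real al0 = of_real be0 \<or>
    2 * (of_real be0 - c * of_real al0) * (of_real be1 - c * of_real al1)
     - 4 * (of_real (b \<bullet> b) - 2 * c * of_real (a \<bullet> b) + c^2 * of_real (a \<bullet> a)) = 0"
proof (cases "c * of_real al0 = of_real be0")
  case True thus ?thesis by simp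
next
  case False
  define cc where "cc = of_real be0 - c * of_real al0"
  have cc: "cc \<noteq> 0" using False unfolding cc_def by auto
  define t where "t = w $ d"
  define A where "A j = (of_real (a$j) :: complex)" for j
  define B where "B j = (of_real (b$j) :: complex)" for j
  have comp: "\<And>i. i < d+1 \<Longrightarrow> (map_mat of_real (block_mat d be0 b be1) *\<^sub>v w) $ i = c * (map_mat of_real (block_mat d al0 a al1) *\<^sub>v w) $ i"
  proof -
    fix i assume i: "i < d+1"
    have "(map_mat of_real (block_mat d be0 b be1) *\<^sub>v w) $ i = (c \<cdot>\<^sub>v (map_mat of_real (block_mat d al0 a al1) *\<^sub>v w)) $ i"
      using eq by simp
    also have "\<dots> = c * (map_mat of_real (block_mat d al0 a al1) *\<^sub>v w) $ i" using i by simp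
    finally show "(map_mat of_real (block_mat d be0 b be1) *\<^sub>v w) $ i = c * (map_mat of_real (block_mat d al0 a al1) *\<^sub>v w) $ i" .
  qed
  have wi: "\<And>i. i < d \<Longrightarrow> cc * w $ i = 2 * (B i - c * A i) * t"
  proof -
    fix i assume i: "i < d"
    have i1: "i < d+1" using i by simp
    have "of_real be0 * w$i - 2 * B i * t = c * (of_real al0 * w$i - 2 * A i * t)"
      using comp[OF i1] i unfolding block_mult_vec_cplx[OF w i1] A_def B_def t_def by simp
    thus "cc * w $ i = 2 * (B i - c * A i) * t" unfolding cc_def by (simp add: algebra_simps)
  qed
  have ed: "-2 * (\<Sum>j<d. B j * w$j) + 2 * of_real be1 * t = c * (-2 * (\<Sum>j<d. A j * w$j) + 2 * of_real al1 * t)"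
  proof -
    have d1: "d < d+1" by simp
    show ?thesis using comp[OF d1] unfolding block_mult_vec_cplx[OF w d1] A_def B_def t_def by simp
  qed
  hence "2 * ((\<Sum>j<d. B j * w$j) - c * (\<Sum>j<d. A j * w$j) - (of_real be1 - c * of_real al1) * t) = 0"
    by (simp add: algebra_simps)
  hence E0: "(\<Sum>j<d. B j * w$j) - c * (\<Sum>j<d. A j * w$j) - (of_real be1 - c * of_real al1) * t = 0"
    by (metis mult_eq_0_iff zero_neq_numeral)
  have ed2: "(\<Sum>j<d. (B j - c * A j) * w$j) = (of_real be1 - c * of_real al1) * t"
    unfolding sum_lin_gen using E0 by (metis eq_iff_diff_eq_0)
  have "cc * (\<Sum>j<d. (B j - c * A j) * w$j) = (\<Sum>j<d. (B j - c * A j) * (cc * w$j))"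
    by (simp add: sum_distrib_left algebra_simps)
  also have "\<dots> = (\<Sum>j<d. 2 * t * (B j - c * A j)^2)"
    by (intro sum.cong refl, simp add: wi power2_eq_square algebra_simps)
  also have "\<dots> = 2 * t * (\<Sum>j<d. (B j - c * A j)^2)" by (simp only: sum_distrib_left[symmetric])
  finally have e3: "cc * ((of_real be1 - c * of_real al1) * t) = 2 * t * (\<Sum>j<d. (B j - c * A j)^2)"
    unfolding ed2 .
  have t0: "t \<noteq> 0"
  proof
    assume t: "t = 0"
    have "w = 0\<^sub>v (d+1)"
    proof (rule eq_vecI)
      fix i assume "i < dim_vec (0\<^sub>v (d+1) :: complex vec)"
      hence i: "i < d+1" by simp
      show "w $ i = 0\<^sub>v (d+1) $ i"
      proof (cases "i < d")
        case True
        with wi[OF True] t cc show ?thesis using i by simp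
      next
        case False
        with i have "i = d" by simp
        with t show ?thesis unfolding t_def by simp
      qed
    qed (use w in simp)
    with w0 show False by simp
  qed
  have "t * (cc * (of_real be1 - c * of_real al1)) = t * (2 * (\<Sum>j<d. (B j - c * A j)^2))"
    using e3 by (simp only: mult.assoc mult.left_commute mult.commute)
  with t0 have e4: "cc * (of_real be1 - c * of_real al1) = 2 * (\<Sum>j<d. (B j - c * A j)^2)"
    by simp
  have ssq: "(\<Sum>j<d. (B j - c * A j)^2) = of_real (b \<bullet> b) - 2 * c * of_real (a \<bullet> b) + c^2 * of_real (a \<bullet> a)"
    unfolding sum_sq_gen sp_sum[OF a a] sp_sum[OF b b] sp_sum[OF a b] A_def B_def
    by (simp add: power2_eq_square mult.commute)
  define U where "U = of_real (b \<bullet> b) - 2 * c * of_real (a \<bullet> b) + c^2 * of_real (a \<bullet> a)"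
  have e5: "cc * (of_real be1 - c * of_real al1) = 2 * U" using e4 unfolding ssq U_def .
  have "2 * (of_real be0 - c * of_real al0) * (of_real be1 - c * of_real al1) - 4 * U
     = 2 * (cc * (of_real be1 - c * of_real al1) - 2 * U)" unfolding cc_def by (simp add: algebra_simps)
  also have "\<dots> = 0" unfolding e5 by simp
  finally show ?thesis unfolding U_def by simp
qed



lemma block_qf:
  fixes z :: "real vec"
  assumes z: "z \<in> carrier_vec (d+1)"
  shows "z \<bullet> (block_mat d c0 v c1 *\<^sub>v z) = c0 * (\<Sum>i<d. (z$i)^2) - 4 * z$d * (\<Sum>j<d. v$j * z$j) + 2 * c1 * (z$d)^2"
  unfolding block_gblock gblock_qf[OF z] by simp

lemma quad_facts:
  fixes al0 al1 be0 be1 n ab bb D lp lm :: real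
  assumes al0: "al0 > 0" and pd: "2 * n < al0 * al1"
    and nonneg: "\<And>x. bb - 2*x*ab + x^2 * n \<ge> 0"
    and D: "D = (4 * ab - (be1 * al0 + be0 * al1))^2 - 4 * (2 * n - al0 * al1) * (2 * bb - be0 * be1)"
    and lp: "lp = ((- 4 * ab + (be1 * al0 + be0 * al1)) + sqrt D) / (4 * n - 2 * al0 * al1)"
    and lm: "lm = ((- 4 * ab + (be1 * al0 + be0 * al1)) - sqrt D) / (4 * n - 2 * al0 * al1)"
  shows "D \<ge> 0" "4 * n - 2 * al0 * al1 \<noteq> 0"
    "\<And>c :: 'a :: real_field. 2 * (of_real be0 - c * of_real al0) * (of_real be1 - c * of_real al1)
        - 4 * (of_real bb - 2 * c * of_real ab + c^2 * of_real n)
      = of_real (2 * al0 * al1 - 4 * n) * (c + of_real lp) * (c + of_real lm)"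
proof -
  define K where "K = 2 * al0 * al1 - 4 * n"
  define H where "H = 4 * ab - (be1 * al0 + be0 * al1)"
  define N where "N = 2 * be0 * be1 - 4 * bb"
  have K: "K > 0" unfolding K_def using pd by simp
  define q where "q x = 2 * (be0 - x * al0) * (be1 - x * al1) - 4 * (bb - 2 * x * ab + x^2 * n)" for x
  have qK: "\<And>x. K * q x = (K * x + H)^2 - D"
    unfolding q_def K_def H_def D by (simp add: power2_eq_square algebra_simps)
  define x0 where "x0 = be0 / al0"
  have "be0 - x0 * al0 = 0" unfolding x0_def using al0 by simp
  hence "q x0 = - 4 * (bb - 2 * x0 * ab + x0^2 * n)" unfolding q_def by simp
  hence "q x0 \<le> 0" using nonneg[of x0] by simp
  hence "K * q x0 \<le> 0" using K by (simp add: mult_nonneg_nonpos)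
  hence "(K * x0 + H)^2 \<le> D" unfolding qK by simp
  moreover have "(K * x0 + H)^2 \<ge> 0" by simp
  ultimately show D0: "D \<ge> 0" by linarith
  show "4 * n - 2 * al0 * al1 \<noteq> 0" using pd by simp
  define r where "r = sqrt D"
  have r2: "r^2 = D" unfolding r_def using D0 by simp
  have nz1: "4 * n - 2 * al0 * al1 \<noteq> 0" "2 * al0 * al1 - 4 * n \<noteq> 0" using pd by auto
  have lp': "lp = (H - r) / K" unfolding lp r_def[symmetric] H_def K_def using nz1
    by (simp add: divide_simps) (simp add: algebra_simps)
  have lm': "lm = (H + r) / K" unfolding lm r_def[symmetric] H_def K_def using nz1
    by (simp add: divide_simps) (simp add: algebra_simps)
  have s1: "K * (lp + lm) = 2 * H" unfolding lp' lm' using K by (simp add: field_simps)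
  have "K * lp * lm = ((H)^2 - r^2) / K" unfolding lp' lm' using K by (simp add: field_simps power2_eq_square)
  also have "\<dots> = N" unfolding r2 D K_def H_def N_def using K unfolding K_def
    by (simp add: field_simps power2_eq_square)
  finally have s2: "K * lp * lm = N" .
  fix c :: "'a :: real_field"
  have "2 * (of_real be0 - c * of_real al0) * (of_real be1 - c * of_real al1)
        - 4 * (of_real bb - 2 * c * of_real ab + c^2 * of_real n)
      = of_real K * c^2 + of_real (2 * H) * c + of_real N"
    unfolding K_def H_def N_def by (simp add: algebra_simps power2_eq_square)
  also have "\<dots> = of_real K * c^2 + of_real (K * (lp + lm)) * c + of_real (K * lp * lm)"
    unfolding s1 s2 ..
  also have "\<dots> = of_real K * (c + of_real lp) * (c + of_real lm)"
    by (simp add: algebra_simps power2_eq_square)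
  finally show "2 * (of_real be0 - c * of_real al0) * (of_real be1 - c * of_real al1)
        - 4 * (of_real bb - 2 * c * of_real ab + c^2 * of_real n)
      = of_real (2 * al0 * al1 - 4 * n) * (c + of_real lp) * (c + of_real lm)" unfolding K_def .
qed



lemma sumsq_ab:
  fixes a b :: "real vec"
  assumes a: "a \<in> carrier_vec d" and b: "b \<in> carrier_vec d"
  shows "(\<Sum>i<d. (p * b$i - x * a$i)^2) = p^2 * (b \<bullet> b) - 2 * p * x * (a \<bullet> b) + x^2 * (a \<bullet> a)"
proof -
  have "(\<Sum>i<d. (p * b$i - x * a$i)^2) = p^2 * (\<Sum>i<d. (b$i)^2) - 2*p*x * (\<Sum>i<d. b$i * a$i) + x^2 * (\<Sum>i<d. (a$i)^2)"
    by (rule sq_expand)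
  also have "(\<Sum>i<d. b$i * a$i) = a \<bullet> b" unfolding sp_sum[OF a b] by (simp add: mult.commute)
  also have "(\<Sum>i<d. (b$i)^2) = b \<bullet> b" unfolding sp_sum[OF b b] by (simp add: power2_eq_square)
  also have "(\<Sum>i<d. (a$i)^2) = a \<bullet> a" unfolding sp_sum[OF a a] by (simp add: power2_eq_square)
  finally show ?thesis .
qed

lemma pd_facts:
  assumes d0: "d > 0" and a: "a \<in> carrier_vec d" and pdA: "pos_def_mat (d+1) (block_mat d al0 a al1)"
  shows "al0 > 0" "2 * (a \<bullet> a) < al0 * al1"
proof -
  have qfpos: "\<And>z. z \<in> carrier_vec (d+1) \<Longrightarrow> z \<noteq> 0\<^sub>v (d+1) \<Longrightarrow> z \<bullet> (block_mat d al0 a al1 *\<^sub>v z) > 0"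
    using pdA unfolding pos_def_mat_def by auto
  define e where "e = vec (d+1) (\<lambda>i. if i = 0 then 1 else (0::real))"
  have ec: "e \<in> carrier_vec (d+1)" unfolding e_def by simp
  have e0: "e \<noteq> 0\<^sub>v (d+1)"
  proof
    assume "e = 0\<^sub>v (d+1)"
    hence "e $ 0 = 0" by simp
    thus False unfolding e_def by simp
  qed
  have ed: "e $ d = 0" unfolding e_def using d0 by simp
  have "(\<Sum>i<d. (e$i)^2) = (\<Sum>i<d. if i = 0 then 1 else 0)"
    unfolding e_def by (intro sum.cong refl) auto
  also have "\<dots> = 1" using d0 by simp
  finally have eX: "(\<Sum>i<d. (e$i)^2) = 1" .
  have "e \<bullet> (block_mat d al0 a al1 *\<^sub>v e) = al0" unfolding block_qf[OF ec] eX ed by simp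
  with qfpos[OF ec e0] show al0: "al0 > 0" by simp
  define n where "n = a \<bullet> a"
  define z where "z = vec (d+1) (\<lambda>i. if i < d then 2 * a$i else al0)"
  have zc: "z \<in> carrier_vec (d+1)" unfolding z_def by simp
  have zd: "z $ d = al0" unfolding z_def by simp
  have z0: "z \<noteq> 0\<^sub>v (d+1)"
  proof
    assume "z = 0\<^sub>v (d+1)"
    hence "z $ d = 0" by simp
    with zd al0 show False by simp
  qed
  have zX: "(\<Sum>i<d. (z$i)^2) = 4 * n"
  proof -
    have "(\<Sum>i<d. (z$i)^2) = (\<Sum>i<d. 4 * (a$i * a$i))"
      unfolding z_def by (intro sum.cong refl) (auto simp: power2_eq_square)
    also have "\<dots> = 4 * n" unfolding n_def sp_sum[OF a a] by (simp only: sum_distrib_left[symmetric])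
    finally show ?thesis .
  qed
  have zY: "(\<Sum>j<d. a$j * z$j) = 2 * n"
  proof -
    have "(\<Sum>j<d. a$j * z$j) = (\<Sum>j<d. 2 * (a$j * a$j))"
      unfolding z_def by (intro sum.cong refl) auto
    also have "\<dots> = 2 * n" unfolding n_def sp_sum[OF a a] by (simp only: sum_distrib_left[symmetric])
    finally show ?thesis .
  qed
  have "z \<bullet> (block_mat d al0 a al1 *\<^sub>v z) = al0 * (2 * al0 * al1 - 4 * n)"
    unfolding block_qf[OF zc] zX zY zd by (simp add: power2_eq_square algebra_simps)
  with qfpos[OF zc z0] have "al0 * (2 * al0 * al1 - 4 * n) > 0" by simp
  with al0 have "2 * al0 * al1 - 4 * n > 0" by (simp add: zero_less_mult_iff)
  thus "2 * (a \<bullet> a) < al0 * al1" unfolding n_def by simp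
qed



lemma mult_mat_vec_zero_r: "A \<in> carrier_mat nr nc \<Longrightarrow> A *\<^sub>v 0\<^sub>v nc = (0\<^sub>v nr :: 'a::comm_ring_1 vec)"
  by (rule eq_vecI) auto

theorem mainTheorem1:
  fixes d :: nat and A B :: "real mat" and \<Delta> lamp lamm \<rho> :: real and \<alpha>0 \<alpha>1 \<beta>0 \<beta>1 :: real and a b :: "real vec"
  assumes "d \<ge> 2"
    and "a \<in> carrier_vec d" and "b \<in> carrier_vec d"
    and "pos_def_mat (d+1) (block_mat d \<alpha>0 a \<alpha>1)"
    and A_def: "A = block_mat d \<alpha>0 a \<alpha>1"
    and B_def: "B = block_mat d \<beta>0 b \<beta>1"
    and Delta_def: "\<Delta> = (4 * (a \<bullet> b) - (\<beta>1 * \<alpha>0 + \<beta>0 * \<alpha>1))\<^sup>2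
              - 4 * (2 * (a \<bullet> a) - \<alpha>0 * \<alpha>1) * (2 * (b \<bullet> b) - \<beta>0 * \<beta>1)"
    and lamp_def: "lamp = ((- 4 * (a \<bullet> b) + (\<beta>1 * \<alpha>0 + \<beta>0 * \<alpha>1)) + sqrt \<Delta>)
              / (4 * (a \<bullet> a) - 2 * \<alpha>0 * \<alpha>1)"
    and lamm_def: "lamm = ((- 4 * (a \<bullet> b) + (\<beta>1 * \<alpha>0 + \<beta>0 * \<alpha>1)) - sqrt \<Delta>)
              / (4 * (a \<bullet> a) - 2 * \<alpha>0 * \<alpha>1)"
    and rho_def: "\<rho> = spectral_radius
              (map_mat complex_of_real (inv_sqrt (d+1) A * B * inv_sqrt (d+1) A))"
  shows "\<Delta> \<ge> 0 \<and> 4 * (a \<bullet> a) - 2 * \<alpha>0 * \<alpha>1 \<noteq> 0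
     \<and> (\<exists>z \<in> carrier_vec (d+1). z \<noteq> 0\<^sub>v (d+1) \<and> \<bar>z \<bullet> (B *\<^sub>v z)\<bar> / (z \<bullet> (A *\<^sub>v z)) = \<rho>)
     \<and> (\<forall>z \<in> carrier_vec (d+1). z \<noteq> 0\<^sub>v (d+1) \<longrightarrow> \<bar>z \<bullet> (B *\<^sub>v z)\<bar> / (z \<bullet> (A *\<^sub>v z)) \<le> \<rho>)
     \<and> \<rho> = max (\<bar>\<beta>0\<bar> / \<alpha>0) (max \<bar>lamp\<bar> \<bar>lamm\<bar>)"
proof -
  have d0: "d > 0" using assms(1) by simp
  have a: "a \<in> carrier_vec d" and b: "b \<in> carrier_vec d" using assms by auto
  have pdA: "pos_def_mat (d+1) A" using assms(4) A_def by simp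
  have al0: "\<alpha>0 > 0" and pd: "2 * (a \<bullet> a) < \<alpha>0 * \<alpha>1" using pd_facts[OF d0 a assms(4)] by auto
  have Ac: "A \<in> carrier_mat (d+1) (d+1)" and Bc: "B \<in> carrier_mat (d+1) (d+1)" unfolding A_def B_def by auto
  have nonneg: "\<And>x. b \<bullet> b - 2 * x * (a \<bullet> b) + x^2 * (a \<bullet> a) \<ge> 0"
  proof -
    fix x :: real
    have "0 \<le> (\<Sum>i<d. (1 * b$i - x * a$i)^2)" by (intro sum_nonneg) auto
    thus "b \<bullet> b - 2 * x * (a \<bullet> b) + x^2 * (a \<bullet> a) \<ge> 0" unfolding sumsq_ab[OF a b] by simp
  qed
  note QF = quad_facts[OF al0 pd nonneg Delta_def lamp_def lamm_def]
  have D0: "\<Delta> \<ge> 0" and den: "4 * (a \<bullet> a) - 2 * \<alpha>0 * \<alpha>1 \<noteq> 0" using QF(1,2) by auto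
  define K where "K = 2 * \<alpha>0 * \<alpha>1 - 4 * (a \<bullet> a)"
  have K: "K > 0" unfolding K_def using pd by simp
  have qreal: "\<And>x::real. 2 * (\<beta>0 - x * \<alpha>0) * (\<beta>1 - x * \<alpha>1) - 4 * (b \<bullet> b - 2 * x * (a \<bullet> b) + x^2 * (a \<bullet> a))
     = K * (x + lamp) * (x + lamm)"
    using QF(3)[where 'a=real] unfolding K_def by simp
  have qcplx: "\<And>c::complex. 2 * (of_real \<beta>0 - c * of_real \<alpha>0) * (of_real \<beta>1 - c * of_real \<alpha>1)
        - 4 * (of_real (b \<bullet> b) - 2 * c * of_real (a \<bullet> b) + c^2 * of_real (a \<bullet> a))
      = of_real K * (c + of_real lamp) * (c + of_real lamm)"
    using QF(3)[where 'a=complex] unfolding K_def by simp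
  obtain S where S: "pos_def_mat (d+1) S" "S * S = A" using sqrt_exists[OF a al0 pd] A_def by auto
  have Sc: "S \<in> carrier_mat (d+1) (d+1)" using S unfolding pos_def_mat_def by auto
  have psq: "pd_sqrt (d+1) A = S" using pd_sqrt_eq[OF S] .
  obtain Si where Si: "Si \<in> carrier_mat (d+1) (d+1)" "S * Si = 1\<^sub>m (d+1)" "Si * S = 1\<^sub>m (d+1)"
    using pd_inv_exists[OF S(1)] by auto
  have isq: "inv_sqrt (d+1) A = Si" unfolding inv_sqrt_def psq using mat_inv_eq[OF Sc Si] .
  define M where "M = Si * B * Si"
  have Mc: "M \<in> carrier_mat (d+1) (d+1)" unfolding M_def using Si Bc by auto
  have Mcc: "map_mat complex_of_real M \<in> carrier_mat (d+1) (d+1)" using Mc by auto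
  have rho: "\<rho> = spectral_radius (map_mat complex_of_real M)" unfolding rho_def isq M_def ..
  define m where "m = max (\<bar>\<beta>0\<bar> / \<alpha>0) (max \<bar>lamp\<bar> \<bar>lamm\<bar>)"
  have m1: "\<bar>\<beta>0\<bar> / \<alpha>0 \<le> m" and m2: "\<bar>lamp\<bar> \<le> m" and m3: "\<bar>lamm\<bar> \<le> m" unfolding m_def by (simp_all add: le_max_iff_disj)
  have bound: "\<And>c. c \<in> spectrum (map_mat complex_of_real M) \<Longrightarrow> norm c \<le> m"
  proof -
    fix c assume "c \<in> spectrum (map_mat complex_of_real M)"
    then obtain v where v: "v \<in> carrier_vec (d+1)" "v \<noteq> 0\<^sub>v (d+1)" "map_mat complex_of_real M *\<^sub>v v = c \<cdot>\<^sub>v v"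
      unfolding spectrum_def eigenvalue_def eigenvector_def using Mc by auto
    let ?S = "map_mat complex_of_real S"
    let ?Si = "map_mat complex_of_real Si"
    let ?B = "map_mat complex_of_real B"
    let ?A = "map_mat complex_of_real A"
    have cS: "?S \<in> carrier_mat (d+1) (d+1)" "?Si \<in> carrier_mat (d+1) (d+1)" "?B \<in> carrier_mat (d+1) (d+1)"
      using Sc Si Bc by auto
    have Meq: "map_mat complex_of_real M = ?Si * ?B * ?Si"
      unfolding M_def using Si(1) Bc
      by (simp add: of_real_hom.mat_hom_mult[of _ "d+1" "d+1" _ "d+1"])
    have SSi: "?S * ?Si = 1\<^sub>m (d+1)"
      using of_real_hom.mat_hom_mult[OF Sc Si(1)] Si(2) of_real_hom.mat_hom_one by metis
    have SS: "?S * ?S = ?A"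
      using of_real_hom.mat_hom_mult[OF Sc Sc] S(2) by metis
    define w where "w = ?Si *\<^sub>v v"
    have wc: "w \<in> carrier_vec (d+1)" unfolding w_def using cS v by auto
    have Sw: "?S *\<^sub>v w = v"
    proof -
      have "?S *\<^sub>v w = (?S * ?Si) *\<^sub>v v" unfolding w_def using cS v by simp
      also have "\<dots> = v" unfolding SSi using v by simp
      finally show ?thesis .
    qed
    have w0: "w \<noteq> 0\<^sub>v (d+1)"
    proof
      assume "w = 0\<^sub>v (d+1)"
      hence "v = ?S *\<^sub>v 0\<^sub>v (d+1)" using Sw by simp
      also have "\<dots> = 0\<^sub>v (d+1)" using cS by (simp add: mult_mat_vec_zero_r)
      finally show False using v by simp
    qed
    have Bwc: "?B *\<^sub>v w \<in> carrier_vec (d+1)" using cS wc by auto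
    have "?Si *\<^sub>v (?B *\<^sub>v w) = c \<cdot>\<^sub>v v"
    proof -
      have c2: "?Si * ?B \<in> carrier_mat (d+1) (d+1)" using cS by auto
      have "(?Si * ?B * ?Si) *\<^sub>v v = (?Si * ?B) *\<^sub>v w" unfolding w_def by (rule assoc_mult_mat_vec[OF c2 cS(2) v(1)])
      also have "\<dots> = ?Si *\<^sub>v (?B *\<^sub>v w)" by (rule assoc_mult_mat_vec[OF cS(2) cS(3) wc])
      finally have "?Si *\<^sub>v (?B *\<^sub>v w) = (?Si * ?B * ?Si) *\<^sub>v v" by simp
      also have "\<dots> = c \<cdot>\<^sub>v v" using v(3) unfolding Meq .
      finally show ?thesis .
    qed
    hence "?S *\<^sub>v (?Si *\<^sub>v (?B *\<^sub>v w)) = ?S *\<^sub>v (c \<cdot>\<^sub>v v)" by simp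
    moreover have "?S *\<^sub>v (?Si *\<^sub>v (?B *\<^sub>v w)) = ?B *\<^sub>v w"
    proof -
      have "?S *\<^sub>v (?Si *\<^sub>v (?B *\<^sub>v w)) = (?S * ?Si) *\<^sub>v (?B *\<^sub>v w)" using cS Bwc by simp
      also have "\<dots> = ?B *\<^sub>v w" unfolding SSi using Bwc by simp
      finally show ?thesis .
    qed
    moreover have "?S *\<^sub>v (c \<cdot>\<^sub>v v) = c \<cdot>\<^sub>v (?A *\<^sub>v w)"
    proof -
      have "?S *\<^sub>v (c \<cdot>\<^sub>v v) = c \<cdot>\<^sub>v (?S *\<^sub>v v)" using cS v by (simp add: mult_mat_vec)
      also have "?S *\<^sub>v v = ?S *\<^sub>v (?S *\<^sub>v w)" unfolding Sw ..
      also have "\<dots> = (?S * ?S) *\<^sub>v w" using cS wc by simp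
      finally show ?thesis unfolding SS .
    qed
    ultimately have Bw: "?B *\<^sub>v w = c \<cdot>\<^sub>v (?A *\<^sub>v w)" by simp
    from cplx_constraint[OF a b wc w0 Bw[unfolded A_def B_def]]
    consider "c * of_real \<alpha>0 = of_real \<beta>0"
      | "2 * (of_real \<beta>0 - c * of_real \<alpha>0) * (of_real \<beta>1 - c * of_real \<alpha>1)
          - 4 * (of_real (b \<bullet> b) - 2 * c * of_real (a \<bullet> b) + c^2 * of_real (a \<bullet> a)) = 0" by blast
    then show "norm c \<le> m"
    proof cases
      case 1
      hence "c = of_real \<beta>0 / of_real \<alpha>0" using al0 by (simp add: eq_divide_eq)
      hence "norm c = \<bar>\<beta>0\<bar> / \<alpha>0" using al0 by (simp add: norm_divide)
      thus ?thesis using m1 by simp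
    next
      case 2
      hence "of_real K * (c + of_real lamp) * (c + of_real lamm) = 0" unfolding qcplx .
      hence "c + of_real lamp = 0 \<or> c + of_real lamm = 0" using K by simp
      hence "c = - of_real lamp \<or> c = - of_real lamm" unfolding eq_neg_iff_add_eq_0 .
      moreover have "norm (- complex_of_real lamp) = \<bar>lamp\<bar>" "norm (- complex_of_real lamm) = \<bar>lamm\<bar>"
        by (simp_all only: norm_minus_cancel norm_of_real)
      ultimately show ?thesis using m2 m3 by auto
    qed
  qed
  have sq_l: "\<And>l. (\<Sum>i<d. (1 * b$i - l * a$i)^2) = b \<bullet> b - 2 * l * (a \<bullet> b) + l^2 * (a \<bullet> a)"
    unfolding sumsq_ab[OF a b] by simp
  obtain l where l: "\<bar>l\<bar> = m" "l * \<alpha>0 = \<beta>0 \<or> 2*(\<beta>0 - l*\<alpha>0)*(\<beta>1 - l*\<alpha>1) - 4*(\<Sum>i<d. (1 * b$i - l*a$i)^2) = 0"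
  proof -
    consider "\<bar>\<beta>0\<bar> / \<alpha>0 \<ge> \<bar>lamp\<bar> \<and> \<bar>\<beta>0\<bar> / \<alpha>0 \<ge> \<bar>lamm\<bar>"
      | "\<not> (\<bar>\<beta>0\<bar> / \<alpha>0 \<ge> \<bar>lamp\<bar> \<and> \<bar>\<beta>0\<bar> / \<alpha>0 \<ge> \<bar>lamm\<bar>)" "\<bar>lamp\<bar> \<ge> \<bar>lamm\<bar>"
      | "\<not> (\<bar>\<beta>0\<bar> / \<alpha>0 \<ge> \<bar>lamp\<bar> \<and> \<bar>\<beta>0\<bar> / \<alpha>0 \<ge> \<bar>lamm\<bar>)" "\<not> \<bar>lamp\<bar> \<ge> \<bar>lamm\<bar>" by blast
    then show ?thesis
    proof cases
      case 1
      have "\<bar>\<beta>0 / \<alpha>0\<bar> = m" using 1 al0 unfolding m_def by (simp add: abs_divide)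
      moreover have "\<beta>0 / \<alpha>0 * \<alpha>0 = \<beta>0" using al0 by simp
      ultimately show ?thesis using that by blast
    next
      case 2
      have "\<bar>- lamp\<bar> = m" using 2 unfolding m_def by auto
      moreover have "2*(\<beta>0 - (- lamp)*\<alpha>0)*(\<beta>1 - (- lamp)*\<alpha>1) - 4*(\<Sum>i<d. (1 * b$i - (- lamp)*a$i)^2) = 0"
        unfolding sq_l qreal by simp
      ultimately show ?thesis using that by blast
    next
      case 3
      have "\<bar>- lamm\<bar> = m" using 3 unfolding m_def by auto
      moreover have "2*(\<beta>0 - (- lamm)*\<alpha>0)*(\<beta>1 - (- lamm)*\<alpha>1) - 4*(\<Sum>i<d. (1 * b$i - (- lamm)*a$i)^2) = 0"
        unfolding sq_l qreal by simp
      ultimately show ?thesis using that by blast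
    qed
  qed
  obtain w where w: "w \<in> carrier_vec (d+1)" "w \<noteq> 0\<^sub>v (d+1)" "B *\<^sub>v w = l \<cdot>\<^sub>v (A *\<^sub>v w)"
    using gen_eig_real[OF a b assms(1) l(2)] unfolding A_def B_def by blast
  define v where "v = S *\<^sub>v w"
  have vc: "v \<in> carrier_vec (d+1)" unfolding v_def using Sc w by auto
  have Siv: "Si *\<^sub>v v = w"
  proof -
    have "Si *\<^sub>v v = (Si * S) *\<^sub>v w" unfolding v_def by (rule assoc_mult_mat_vec[symmetric, OF Si(1) Sc w(1)])
    also have "\<dots> = w" unfolding Si(3) using w by simp
    finally show ?thesis .
  qed
  have v0: "v \<noteq> 0\<^sub>v (d+1)"
  proof
    assume "v = 0\<^sub>v (d+1)"
    hence "w = Si *\<^sub>v 0\<^sub>v (d+1)" using Siv by simp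
    also have "\<dots> = 0\<^sub>v (d+1)" using Si by (simp add: mult_mat_vec_zero_r)
    finally show False using w by simp
  qed
  have Mv: "M *\<^sub>v v = l \<cdot>\<^sub>v v"
  proof -
    have Awc: "A *\<^sub>v w \<in> carrier_vec (d+1)" using Ac w by auto
    have c2: "Si * B \<in> carrier_mat (d+1) (d+1)" using Si Bc by auto
    have Siv_c: "Si *\<^sub>v v \<in> carrier_vec (d+1)" using Si vc by auto
    have "M *\<^sub>v v = (Si * B) *\<^sub>v (Si *\<^sub>v v)" unfolding M_def by (rule assoc_mult_mat_vec[OF c2 Si(1) vc])
    also have "\<dots> = Si *\<^sub>v (B *\<^sub>v (Si *\<^sub>v v))" by (rule assoc_mult_mat_vec[OF Si(1) Bc Siv_c])
    finally have "M *\<^sub>v v = Si *\<^sub>v (B *\<^sub>v (Si *\<^sub>v v))" .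
    also have "\<dots> = Si *\<^sub>v (l \<cdot>\<^sub>v (A *\<^sub>v w))" unfolding Siv w(3) ..
    also have "\<dots> = l \<cdot>\<^sub>v (Si *\<^sub>v (A *\<^sub>v w))" using Si Awc by (simp add: mult_mat_vec)
    also have "Si *\<^sub>v (A *\<^sub>v w) = Si *\<^sub>v ((S * S) *\<^sub>v w)" unfolding S(2) ..
    also have "\<dots> = Si *\<^sub>v (S *\<^sub>v (S *\<^sub>v w))" by (rule arg_cong[where f="\<lambda>x. Si *\<^sub>v x"], rule assoc_mult_mat_vec[OF Sc Sc w(1)])
    also have "\<dots> = (Si * S) *\<^sub>v (S *\<^sub>v w)" using Sc w by (intro assoc_mult_mat_vec[symmetric, OF Si(1) Sc]) auto
    also have "\<dots> = v" unfolding Si(3) v_def using Sc w by simp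
    finally show ?thesis .
  qed
  have ev: "complex_of_real l \<in> spectrum (map_mat complex_of_real M)"
  proof -
    have "map_mat complex_of_real M *\<^sub>v map_vec complex_of_real v = map_vec complex_of_real (M *\<^sub>v v)"
      by (rule of_real_hom.mult_mat_vec_hom[OF Mc vc, symmetric])
    also have "\<dots> = complex_of_real l \<cdot>\<^sub>v map_vec complex_of_real v" unfolding Mv of_real_hom.vec_hom_smult ..
    finally have e: "map_mat complex_of_real M *\<^sub>v map_vec complex_of_real v = complex_of_real l \<cdot>\<^sub>v map_vec complex_of_real v" .
    have "map_vec complex_of_real v \<noteq> 0\<^sub>v (d+1)" using v0 of_real_hom.vec_hom_zero_iff by simp
    moreover have "map_vec complex_of_real v \<in> carrier_vec (dim_row (map_mat complex_of_real M))" using vc Mc by simp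
    moreover have "dim_row (map_mat complex_of_real M) = d+1" using Mc by simp
    ultimately have "eigenvector (map_mat complex_of_real M) (map_vec complex_of_real v) (complex_of_real l)"
      unfolding eigenvector_def using e by metis
    thus ?thesis unfolding spectrum_def eigenvalue_def by blast
  qed
  have rho_eq: "\<rho> = m"
  proof -
    have n0: "d + 1 > 0" by simp
    note sr = spectral_radius_mem_max[OF Mcc n0]
    from sr(1) obtain c where c: "c \<in> spectrum (map_mat complex_of_real M)" "spectral_radius (map_mat complex_of_real M) = norm c" by auto
    have le1: "\<rho> \<le> m" unfolding rho c(2) using bound[OF c(1)] .
    have "norm (complex_of_real l) \<in> norm ` spectrum (map_mat complex_of_real M)" using ev by blast
    hence "norm (complex_of_real l) \<le> \<rho>" unfolding rho by (rule sr(2))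
    hence le2: "m \<le> \<rho>" using l(1) by simp
    from le1 le2 show ?thesis by simp
  qed
  have qfA: "\<And>z. z \<in> carrier_vec (d+1) \<Longrightarrow> z \<noteq> 0\<^sub>v (d+1) \<Longrightarrow> z \<bullet> (A *\<^sub>v z) > 0"
    using pdA unfolding pos_def_mat_def by auto
  have ray_bound: "\<And>z. z \<in> carrier_vec (d+1) \<Longrightarrow> z \<noteq> 0\<^sub>v (d+1) \<Longrightarrow> \<bar>z \<bullet> (B *\<^sub>v z)\<bar> / (z \<bullet> (A *\<^sub>v z)) \<le> \<rho>"
  proof -
    fix z :: "real vec" assume zc: "z \<in> carrier_vec (d+1)" and z0: "z \<noteq> 0\<^sub>v (d+1)"
    define QA where "QA = z \<bullet> (A *\<^sub>v z)"
    define QB where "QB = z \<bullet> (B *\<^sub>v z)"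
    have QA0: "QA > 0" unfolding QA_def using qfA[OF zc z0] .
    define X where "X = (\<Sum>i<d. (z$i)^2)"
    define Ya where "Ya = (\<Sum>j<d. a$j * z$j)"
    define Yb where "Yb = (\<Sum>j<d. b$j * z$j)"
    define t where "t = z $ d"
    have QA: "QA = \<alpha>0 * X - 4 * t * Ya + 2 * \<alpha>1 * t^2" unfolding QA_def A_def block_qf[OF zc] X_def Ya_def t_def ..
    have QB: "QB = \<beta>0 * X - 4 * t * Yb + 2 * \<beta>1 * t^2" unfolding QB_def B_def block_qf[OF zc] X_def Yb_def t_def ..
    have both: "\<And>mu. mu > m \<Longrightarrow> mu * QA - QB \<ge> 0 \<and> mu * QA + QB \<ge> 0"
    proof -
      fix mu assume mu: "mu > m"
      have p1: "mu + lamp > 0" "mu + lamm > 0" "mu - lamp > 0" "mu - lamm > 0" using mu m2 m3 by auto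
      have "mu * \<alpha>0 > \<bar>\<beta>0\<bar>"
      proof -
        have "\<bar>\<beta>0\<bar> = (\<bar>\<beta>0\<bar> / \<alpha>0) * \<alpha>0" using al0 by simp
        also have "\<dots> < mu * \<alpha>0" using mu m1 al0 by (intro mult_strict_right_mono) auto
        finally show ?thesis .
      qed
      hence c1: "mu * \<alpha>0 - \<beta>0 > 0" and c2: "mu * \<alpha>0 - (- \<beta>0) > 0" by auto
      have h1: "2 * (mu * \<alpha>0 - \<beta>0) * (mu * \<alpha>1 - \<beta>1) - 4 * (\<Sum>i<d. (mu * a$i - 1 * b$i)^2) \<ge> 0"
      proof -
        have "(\<Sum>i<d. (mu * a$i - 1 * b$i)^2) = (\<Sum>i<d. (1 * b$i - mu * a$i)^2)"
          by (intro sum.cong refl) (simp add: power2_commute)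
        also have "\<dots> = b \<bullet> b - 2 * mu * (a \<bullet> b) + mu^2 * (a \<bullet> a)" by (rule sq_l)
        finally have e: "(\<Sum>i<d. (mu * a$i - 1 * b$i)^2) = b \<bullet> b - 2 * mu * (a \<bullet> b) + mu^2 * (a \<bullet> a)" .
        have "2 * (mu * \<alpha>0 - \<beta>0) * (mu * \<alpha>1 - \<beta>1) - 4 * (\<Sum>i<d. (mu * a$i - 1 * b$i)^2)
          = 2 * (\<beta>0 - mu * \<alpha>0) * (\<beta>1 - mu * \<alpha>1) - 4 * (b \<bullet> b - 2 * mu * (a \<bullet> b) + mu^2 * (a \<bullet> a))"
          unfolding e by (simp add: algebra_simps)
        also have "\<dots> = K * (mu + lamp) * (mu + lamm)" by (rule qreal)
        also have "\<dots> \<ge> 0" using K p1 by simp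
        finally show ?thesis .
      qed
      have h2: "2 * (mu * \<alpha>0 - (- \<beta>0)) * (mu * \<alpha>1 - (- \<beta>1)) - 4 * (\<Sum>i<d. (mu * a$i - 1 * (- b$i))^2) \<ge> 0"
      proof -
        have "(\<Sum>i<d. (mu * a$i - 1 * (- b$i))^2) = (\<Sum>i<d. (1 * b$i - (- mu) * a$i)^2)"
          by (intro sum.cong refl) (simp add: power2_eq_square algebra_simps)
        also have "\<dots> = b \<bullet> b - 2 * (- mu) * (a \<bullet> b) + (- mu)^2 * (a \<bullet> a)" by (rule sq_l)
        finally have e: "(\<Sum>i<d. (mu * a$i - 1 * (- b$i))^2) = b \<bullet> b - 2 * (- mu) * (a \<bullet> b) + (- mu)^2 * (a \<bullet> a)" .
        have "2 * (mu * \<alpha>0 - (- \<beta>0)) * (mu * \<alpha>1 - (- \<beta>1)) - 4 * (\<Sum>i<d. (mu * a$i - 1 * (- b$i))^2)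
          = 2 * (\<beta>0 - (- mu) * \<alpha>0) * (\<beta>1 - (- mu) * \<alpha>1) - 4 * (b \<bullet> b - 2 * (- mu) * (a \<bullet> b) + (- mu)^2 * (a \<bullet> a))"
          unfolding e by (simp add: algebra_simps)
        also have "\<dots> = K * ((- mu) + lamp) * ((- mu) + lamm)" by (rule qreal)
        also have "\<dots> = K * (mu - lamp) * (mu - lamm)" by (simp add: algebra_simps)
        also have "\<dots> \<ge> 0" using K p1 by simp
        finally show ?thesis .
      qed
      have r1: "mu * (\<alpha>0 * (\<Sum>i<d. (z$i)^2) - 4 * t * (\<Sum>i<d. a$i * z$i) + 2 * \<alpha>1 * t^2)
          - (\<beta>0 * (\<Sum>i<d. (z$i)^2) - 4 * t * (\<Sum>i<d. b$i * z$i) + 2 * \<beta>1 * t^2) \<ge> 0"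
        using ray[where mu=mu and alz=\<alpha>0 and bez=\<beta>0 and alo=\<alpha>1 and beo=\<beta>1 and d=d and a="\<lambda>i. a$i" and b="\<lambda>i. b$i" and z="\<lambda>i. z$i" and t=t, OF c1 h1] by simp
      have r2: "mu * (\<alpha>0 * (\<Sum>i<d. (z$i)^2) - 4 * t * (\<Sum>i<d. a$i * z$i) + 2 * \<alpha>1 * t^2)
          - ((- \<beta>0) * (\<Sum>i<d. (z$i)^2) - 4 * t * (\<Sum>i<d. (- b$i) * z$i) + 2 * (- \<beta>1) * t^2) \<ge> 0"
        using ray[where mu=mu and alz=\<alpha>0 and bez="- \<beta>0" and alo=\<alpha>1 and beo="- \<beta>1" and d=d and a="\<lambda>i. a$i" and b="\<lambda>i. - b$i" and z="\<lambda>i. z$i" and t=t, OF c2 h2] by simp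
      have sn: "(\<Sum>i<d. (- b$i) * z$i) = - Yb" unfolding Yb_def by (simp add: sum_negf)
      show "mu * QA - QB \<ge> 0 \<and> mu * QA + QB \<ge> 0"
        using r1 r2 unfolding QA QB sn X_def[symmetric] Ya_def[symmetric] Yb_def[symmetric] by (simp add: algebra_simps)
    qed
    have "\<bar>QB\<bar> \<le> m * QA"
    proof (rule field_le_epsilon)
      fix e :: real assume e: "e > 0"
      define mu where "mu = m + e / QA"
      have "mu > m" unfolding mu_def using e QA0 by simp
      from both[OF this] have "\<bar>QB\<bar> \<le> mu * QA" by auto
      also have "mu * QA = m * QA + e" unfolding mu_def using QA0 by (simp add: field_simps)
      finally show "\<bar>QB\<bar> \<le> m * QA + e" .
    qed
    hence "\<bar>QB\<bar> / QA \<le> m" using QA0 by (simp add: divide_le_eq)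
    thus "\<bar>z \<bullet> (B *\<^sub>v z)\<bar> / (z \<bullet> (A *\<^sub>v z)) \<le> \<rho>" unfolding QA_def QB_def rho_eq .
  qed
  have attain: "\<bar>w \<bullet> (B *\<^sub>v w)\<bar> / (w \<bullet> (A *\<^sub>v w)) = \<rho>"
  proof -
    have QA0: "w \<bullet> (A *\<^sub>v w) > 0" using qfA[OF w(1,2)] .
    have "w \<bullet> (B *\<^sub>v w) = l * (w \<bullet> (A *\<^sub>v w))" unfolding w(3) using w(1) Ac by simp
    hence "\<bar>w \<bullet> (B *\<^sub>v w)\<bar> / (w \<bullet> (A *\<^sub>v w)) = \<bar>l\<bar>" using QA0 by (simp add: abs_mult)
    thus ?thesis using l(1) rho_eq by simp
  qed
  show ?thesis
    using D0 den attain w(1,2) ray_bound rho_eq unfolding m_def by blast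
qed


end
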